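(* Let $G=(V,E)$ be a graph, $v\in V$, and $S_v$ the partial star product of $v$. (a) If $e=(v,u),f=(v,w)\in E_v$ satisfy $(e,f)\notin\mathfrak d_v^*$, then $e$ and $f$ span exactly one square in $G$, this square is chordless, and its top vertex $x$ is unique, i.e. $u$ and $w$ are the only common neighbours of $v$ and $x$ in $G$. (b) Conversely, if $x$ is a non-primal vertex of $S_v$, then there is exactly one chordless square in $S_v$ that contains $x$ and is spanned by two edges $e,f\in E_v$ with $(e,f)\notin\mathfrak d_v^*$.
   Context: All graphs are finite, simple and undirected. For a graph $G=(V,E)$ and $v\in V$, $E_v$ denotes the set of edges incident to $v$. For two distinct adjacent edges $e=(v,u)$, $f=(v,w)$, a square spanned by $e$ and $f$ is a $4$-cycle $v,u,x,w,v$ in $G$ with $x\notin\{v,u,w\}$; $x$ is its top vertex. The square is chordless if neither $(u,w)$ nor $(v,x)$ is an edge of $G$. In a chordless square $v,u,x,w$, the edge $(x,w)$ is the opposite edge of $(v,u)$ and $(x,u)$ is the opposite edge of $(v,w)$ (and vice versa). The relation $\delta(G)\subseteq E\times E$: $(e,f)\in\delta(G)$ iff (i) $e,f$ are distinct adjacent edges and it is not the case that $e$ and $f$ span exactly one square and that square is chordless; or (ii) $e$ and $f$ are opposite edges of a chordless square; or (iii) $e=f$. For a reflexive symmetric relation $R$, $R^*$ denotes its transitive closure (finest equivalence relation containing $R$). Define $\mathfrak d_v=((E_v\times E)\cup(E\times E_v))\cap\delta(G)$ and $\mathfrak d_v^*$ the finest equivalence relation on $E$ containing $\mathfrak d_v$.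 Let $F_v\subseteq E\setminus E_v$ be the set of edges that are the edges not incident to $v$ of some chordless square spanned by two edges $e,e'\in E_v$ with $(e,e')\notin\mathfrak d_v^*$. The partial star product (PSP) $S_v$ is the subgraph of $G$ with edge set $E_v\cup F_v$ and vertex set the set of endpoints of these edges; $v$ is its center, neighbours of $v$ are its primal vertices, and the remaining vertices of $S_v$ other than $v$ are non-primal vertices. *)

theory Defs
  imports Main
begin

definition simple_graph :: "'a set \<Rightarrow> 'a set set \<Rightarrow> bool" where
  "simple_graph V E \<longleftrightarrow> finite V \<and>
     (\<forall>e\<in>E. \<exists>a b. a \<noteq> b \<and> a \<in> V \<and> b \<in> V \<and> e = {a, b})"

definition inc_edges :: "'a set set \<Rightarrow> 'a \<Rightarrow> 'a set set" where
  "inc_edges E v = {e \<in> E. v \<in> e}"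

definition adjacent_edges :: "'a set set \<Rightarrow> 'a set \<Rightarrow> 'a set \<Rightarrow> bool" where
  "adjacent_edges E e f \<longleftrightarrow> e \<in> E \<and> f \<in> E \<and> e \<noteq> f \<and> e \<inter> f \<noteq> {}"

text \<open>The squares v,u,x,w,v spanned by e = (v,u) and f = (v,w), as tuples (v,u,x,w);
  x is the top vertex.\<close>
definition squares :: "'a set set \<Rightarrow> 'a set \<Rightarrow> 'a set \<Rightarrow> ('a \<times> 'a \<times> 'a \<times> 'a) set" where
  "squares E e f = {(v, u, x, w). e \<in> E \<and> f \<in> E \<and> e = {v, u} \<and> f = {v, w} \<and>
      v \<noteq> u \<and> v \<noteq> w \<and> u \<noteq> w \<and> x \<notin> {v, u, w} \<and> {u, x} \<in> E \<and> {x, w} \<in> E}"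

definition chordless :: "'a set set \<Rightarrow> ('a \<times> 'a \<times> 'a \<times> 'a) \<Rightarrow> bool" where
  "chordless E s = (case s of (v, u, x, w) \<Rightarrow> {u, w} \<notin> E \<and> {v, x} \<notin> E)"

definition chordless_square :: "'a set set \<Rightarrow> 'a \<Rightarrow> 'a \<Rightarrow> 'a \<Rightarrow> 'a \<Rightarrow> bool" where
  "chordless_square E v u x w \<longleftrightarrow> distinct [v, u, x, w] \<and>
     {v, u} \<in> E \<and> {u, x} \<in> E \<and> {x, w} \<in> E \<and> {w, v} \<in> E \<and>
     {u, w} \<notin> E \<and> {v, x} \<notin> E"

definition opposite_edges :: "'a set set \<Rightarrow> 'a set \<Rightarrow> 'a set \<Rightarrow> bool" where
  "opposite_edges E e f \<longleftrightarrow> (\<exists>v u x w. chordless_square E v u x w \<and>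
     ((e = {v, u} \<and> f = {x, w}) \<or> (e = {x, w} \<and> f = {v, u}) \<or>
      (e = {v, w} \<and> f = {x, u}) \<or> (e = {x, u} \<and> f = {v, w})))"

definition delta :: "'a set set \<Rightarrow> ('a set \<times> 'a set) set" where
  "delta E = {(e, f). e \<in> E \<and> f \<in> E \<and>
     ((adjacent_edges E e f \<and>
        \<not> (card (squares E e f) = 1 \<and> (\<forall>s \<in> squares E e f. chordless E s)))
      \<or> opposite_edges E e f \<or> e = f)}"

definition equiv_closure :: "'b set \<Rightarrow> ('b \<times> 'b) set \<Rightarrow> ('b \<times> 'b) set" where
  "equiv_closure A R = (Id_on A \<union> R \<union> R\<inverse>)\<^sup>+"

definition dv :: "'a set set \<Rightarrow> 'a \<Rightarrow> ('a set \<times> 'a set) set" where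
  "dv E v = ((inc_edges E v \<times> E) \<union> (E \<times> inc_edges E v)) \<inter> delta E"

definition dv_star :: "'a set set \<Rightarrow> 'a \<Rightarrow> ('a set \<times> 'a set) set" where
  "dv_star E v = equiv_closure E (dv E v)"

definition Fv :: "'a set set \<Rightarrow> 'a \<Rightarrow> 'a set set" where
  "Fv E v = {g. \<exists>u x w. {v, u} \<in> inc_edges E v \<and> {v, w} \<in> inc_edges E v \<and>
      chordless_square E v u x w \<and> ({v, u}, {v, w}) \<notin> dv_star E v \<and>
      (g = {u, x} \<or> g = {x, w})}"

definition psp_edges :: "'a set set \<Rightarrow> 'a \<Rightarrow> 'a set set" where
  "psp_edges E v = inc_edges E v \<union> Fv E v"

definition psp_vertices :: "'a set set \<Rightarrow> 'a \<Rightarrow> 'a set" where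
  "psp_vertices E v = \<Union> (psp_edges E v)"

definition non_primal :: "'a set set \<Rightarrow> 'a \<Rightarrow> 'a \<Rightarrow> bool" where
  "non_primal E v x \<longleftrightarrow> x \<in> psp_vertices E v \<and> x \<noteq> v \<and> {v, x} \<notin> E"

end

theory Submission
  imports Defs
begin

lemma edge_ne:
  assumes G: "simple_graph V E" and e: "{a, b} \<in> E" shows "a \<noteq> b"
proof -
  obtain c d where "c \<noteq> d" "{a, b} = {c, d}" using G e unfolding simple_graph_def by blast
  then show ?thesis by (metis doubleton_eq_iff insert_absorb2)
qed

lemma dv_in_star: "(a, b) \<in> dv E v \<Longrightarrow> (a, b) \<in> dv_star E v"
  unfolding dv_star_def equiv_closure_def by auto

lemma partA:
  assumes G: "simple_graph V E" and eu: "{v, u} \<in> E" and ew: "{v, w} \<in> E"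
    and nd: "({v, u}, {v, w}) \<notin> dv_star E v"
  shows "\<exists>x. squares E {v, u} {v, w} = {(v, u, x, w)} \<and>
                  chordless E (v, u, x, w) \<and>
                  {y. {v, y} \<in> E \<and> {x, y} \<in> E} = {u, w}"
proof -
  have uv: "u \<noteq> v" using edge_ne[OF G eu] by auto
  have wv: "w \<noteq> v" using edge_ne[OF G ew] by auto
  have uw: "u \<noteq> w"
  proof
    assume "u = w"
    then have "({v, u}, {v, w}) \<in> dv_star E v" using eu
      unfolding dv_star_def equiv_closure_def by auto
    with nd show False by simp
  qed
  have inc_u: "{v, u} \<in> inc_edges E v" using eu by (simp add: inc_edges_def)
  have inc_w: "{v, w} \<in> inc_edges E v" using ew by (simp add: inc_edges_def)
  have nde: "({v, u}, {v, w}) \<notin> delta E"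
  proof
    assume "({v, u}, {v, w}) \<in> delta E"
    then have "({v, u}, {v, w}) \<in> dv E v" using inc_u ew by (simp add: dv_def)
    then have "({v, u}, {v, w}) \<in> dv_star E v" by (rule dv_in_star)
    with nd show False by simp
  qed
  have ne: "{v, u} \<noteq> {v, w}" using uw uv wv by (metis doubleton_eq_iff)
  have adj: "adjacent_edges E {v, u} {v, w}" using eu ew ne by (auto simp: adjacent_edges_def)
  have c1: "card (squares E {v, u} {v, w}) = 1"
    and ch: "\<forall>s\<in>squares E {v, u} {v, w}. chordless E s"
    using nde adj eu ew by (auto simp: delta_def)
  obtain s where ss: "squares E {v, u} {v, w} = {s}" using c1 by (meson card_1_singletonE)
  obtain v' u' x w' where s: "s = (v', u', x, w')" by (cases s) auto
  have sm: "(v', u', x, w') \<in> squares E {v, u} {v, w}" using ss s by simp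
  then have sp: "{v, u} = {v', u'}" "{v, w} = {v', w'}" "v' \<noteq> u'" "v' \<noteq> w'" "u' \<noteq> w'"
    "x \<notin> {v', u', w'}" "{u', x} \<in> E" "{x, w'} \<in> E"
    by (auto simp: squares_def)
  have vv: "v' = v" using sp(1,2) uw uv wv by (metis doubleton_eq_iff)
  have uu: "u' = u" using sp(1,3) vv by (metis doubleton_eq_iff)
  have ww: "w' = w" using sp(2,4) vv by (metis doubleton_eq_iff)
  have sq: "squares E {v, u} {v, w} = {(v, u, x, w)}" using ss s vv uu ww by simp
  have chx: "chordless E (v, u, x, w)" using ch sq by simp
  have chd: "{u, w} \<notin> E" "{v, x} \<notin> E" using chx by (auto simp: chordless_def)
  have ux: "{u, x} \<in> E" and xw: "{x, w} \<in> E" and xn: "x \<notin> {v, u, w}"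
    using sp uu ww vv by auto
  have cs: "chordless_square E v u x w"
    unfolding chordless_square_def using uv wv uw xn eu ew ux xw chd
    by (auto simp: insert_commute)
  have "{y. {v, y} \<in> E \<and> {x, y} \<in> E} = {u, w}"
  proof
    show "{u, w} \<subseteq> {y. {v, y} \<in> E \<and> {x, y} \<in> E}"
      using eu ew ux xw by (auto simp: insert_commute)
  next
    show "{y. {v, y} \<in> E \<and> {x, y} \<in> E} \<subseteq> {u, w}"
    proof
      fix y assume "y \<in> {y. {v, y} \<in> E \<and> {x, y} \<in> E}"
      then have vy: "{v, y} \<in> E" and xy: "{x, y} \<in> E" by auto
      show "y \<in> {u, w}"
      proof (rule ccontr)
        assume yn: "y \<notin> {u, w}"
        have yv: "y \<noteq> v" using edge_ne[OF G vy] by auto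
        have yx: "y \<noteq> x" using edge_ne[OF G xy] by auto
        have opp: "opposite_edges E {v, u} {x, w}"
          unfolding opposite_edges_def using cs by blast
        have d1: "({v, u}, {x, w}) \<in> dv E v"
          using opp inc_u xw eu by (auto simp: dv_def delta_def)
        have m1: "(w, v, u, x) \<in> squares E {v, w} {x, w}"
          using ew xw wv xn eu ux uv uw by (auto simp: squares_def insert_commute)
        have m2: "(w, v, y, x) \<in> squares E {v, w} {x, w}"
          using ew xw wv xn vy xy yn yv yx by (auto simp: squares_def insert_commute)
        have "card (squares E {v, w} {x, w}) \<noteq> 1"
        proof
          assume "card (squares E {v, w} {x, w}) = 1"
          then obtain t where "squares E {v, w} {x, w} = {t}" by (meson card_1_singletonE)
          with m1 m2 yn show False by auto
        qed
        moreover have "adjacent_edges E {v, w} {x, w}"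
          using ew xw xn by (auto simp: adjacent_edges_def doubleton_eq_iff)
        ultimately have d2: "({v, w}, {x, w}) \<in> dv E v"
          using inc_w ew xw by (auto simp: dv_def delta_def)
        have "({v, u}, {v, w}) \<in> dv_star E v"
          unfolding dv_star_def equiv_closure_def
          using d1 d2 by (meson UnI1 UnI2 converseI trancl.simps r_into_trancl)
        with nd show False by simp
      qed
    qed
  qed
  then show ?thesis using sq chx by blast
qed

lemma Fv_sub: "Fv E v \<subseteq> E"
  unfolding Fv_def chordless_square_def by auto

lemma psp_sub: "psp_edges E v \<subseteq> E"
  unfolding psp_edges_def inc_edges_def using Fv_sub[of E v] by auto

theorem lemma3p2:
  fixes V :: "'a set" and E :: "'a set set" and v :: 'a
  assumes G: "simple_graph V E" and vV: "v \<in> V"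
  shows "(\<forall>u w. {v, u} \<in> inc_edges E v \<and> {v, w} \<in> inc_edges E v \<and>
             ({v, u}, {v, w}) \<notin> dv_star E v \<longrightarrow>
             (\<exists>x. squares E {v, u} {v, w} = {(v, u, x, w)} \<and>
                  chordless E (v, u, x, w) \<and>
                  {y. {v, y} \<in> E \<and> {x, y} \<in> E} = {u, w}))
       \<and> (\<forall>x. non_primal E v x \<longrightarrow>
             (\<exists>!Q. \<exists>u x' w. Q = {{v, u}, {u, x'}, {x', w}, {w, v}} \<and>
                  x \<in> {v, u, x', w} \<and>
                  chordless_square (psp_edges E v) v u x' w \<and>
                  {v, u} \<in> inc_edges E v \<and> {v, w} \<in> inc_edges E v \<and>
                  ({v, u}, {v, w}) \<notin> dv_star E v))"
proof (intro conjI allI impI)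
  fix u w assume h: "{v, u} \<in> inc_edges E v \<and> {v, w} \<in> inc_edges E v \<and>
             ({v, u}, {v, w}) \<notin> dv_star E v"
  then show "\<exists>x. squares E {v, u} {v, w} = {(v, u, x, w)} \<and>
                  chordless E (v, u, x, w) \<and>
                  {y. {v, y} \<in> E \<and> {x, y} \<in> E} = {u, w}"
    using partA[OF G] by (auto simp: inc_edges_def)
next
  fix x assume np: "non_primal E v x"
  have common: "{y. {v, y} \<in> E \<and> {x, y} \<in> E} = {u, w}"
    if th: "{v, u} \<in> E" "{v, w} \<in> E" "({v, u}, {v, w}) \<notin> dv_star E v"
       "distinct [v, u, x, w]" "{u, x} \<in> E" "{x, w} \<in> E" for u w
  proof -
    obtain x'' where sq: "squares E {v, u} {v, w} = {(v, u, x'', w)}"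
      and cm: "{y. {v, y} \<in> E \<and> {x'', y} \<in> E} = {u, w}"
      using partA[OF G th(1,2,3)] by blast
    have "(v, u, x, w) \<in> squares E {v, u} {v, w}"
      using th by (auto simp: squares_def)
    then have "x'' = x" using sq by simp
    then show ?thesis using cm by simp
  qed
  have xv: "x \<noteq> v" and vx: "{v, x} \<notin> E" and xp: "x \<in> psp_vertices E v"
    using np by (auto simp: non_primal_def)
  obtain g where g: "g \<in> psp_edges E v" "x \<in> g" using xp by (auto simp: psp_vertices_def)
  have "g \<notin> inc_edges E v"
  proof
    assume "g \<in> inc_edges E v"
    then have "g \<in> E" "v \<in> g" by (auto simp: inc_edges_def)
    then obtain a b where "g = {a, b}" using G by (auto simp: simple_graph_def)
    with \<open>g \<in> E\<close> \<open>v \<in> g\<close> g(2) xv vx show False by (auto simp: insert_commute)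
  qed
  then have "g \<in> Fv E v" using g by (auto simp: psp_edges_def)
  then obtain u x0 w where fu: "{v, u} \<in> inc_edges E v" and fw: "{v, w} \<in> inc_edges E v"
    and cs: "chordless_square E v u x0 w" and nd: "({v, u}, {v, w}) \<notin> dv_star E v"
    and gg: "g = {u, x0} \<or> g = {x0, w}"
    unfolding Fv_def by blast
  have x0: "x0 = x" using gg g(2) cs vx
    by (auto simp: chordless_square_def insert_commute)
  have csx: "chordless_square E v u x w" using cs x0 by simp
  have eu: "{v, u} \<in> E" and ew: "{v, w} \<in> E" using fu fw by (auto simp: inc_edges_def)
  have ux: "{u, x} \<in> Fv E v" "{x, w} \<in> Fv E v"
    unfolding Fv_def using fu fw csx nd by blast+
  have cm0: "{y. {v, y} \<in> E \<and> {x, y} \<in> E} = {u, w}"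
    using common[OF eu ew nd] csx by (auto simp: chordless_square_def)
  define Q0 where "Q0 = {{v, u}, {u, x}, {x, w}, {w, v}}"
  show "\<exists>!Q. \<exists>u x' w. Q = {{v, u}, {u, x'}, {x', w}, {w, v}} \<and>
                  x \<in> {v, u, x', w} \<and>
                  chordless_square (psp_edges E v) v u x' w \<and>
                  {v, u} \<in> inc_edges E v \<and> {v, w} \<in> inc_edges E v \<and>
                  ({v, u}, {v, w}) \<notin> dv_star E v"
  proof (rule ex1I[of _ Q0])
    have "chordless_square (psp_edges E v) v u x w"
      using csx ux fu fw psp_sub[of E v]
      unfolding chordless_square_def psp_edges_def by (auto simp: insert_commute)
    then show "\<exists>u' x' w'. Q0 = {{v, u'}, {u', x'}, {x', w'}, {w', v}} \<and>
                  x \<in> {v, u', x', w'} \<and>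
                  chordless_square (psp_edges E v) v u' x' w' \<and>
                  {v, u'} \<in> inc_edges E v \<and> {v, w'} \<in> inc_edges E v \<and>
                  ({v, u'}, {v, w'}) \<notin> dv_star E v"
      unfolding Q0_def using fu fw nd by blast
  next
    fix Q assume "\<exists>u' x' w'. Q = {{v, u'}, {u', x'}, {x', w'}, {w', v}} \<and>
                  x \<in> {v, u', x', w'} \<and>
                  chordless_square (psp_edges E v) v u' x' w' \<and>
                  {v, u'} \<in> inc_edges E v \<and> {v, w'} \<in> inc_edges E v \<and>
                  ({v, u'}, {v, w'}) \<notin> dv_star E v"
    then obtain u' x' w' where Q: "Q = {{v, u'}, {u', x'}, {x', w'}, {w', v}}"
      and xin: "x \<in> {v, u', x', w'}"
      and cs': "chordless_square (psp_edges E v) v u' x' w'"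
      and fu': "{v, u'} \<in> inc_edges E v" and fw': "{v, w'} \<in> inc_edges E v"
      and nd': "({v, u'}, {v, w'}) \<notin> dv_star E v" by blast
    have eu': "{v, u'} \<in> E" and ew': "{v, w'} \<in> E" using fu' fw' by (auto simp: inc_edges_def)
    have x': "x' = x" using xin xv vx eu' ew' by (auto simp: insert_commute)
    have cs'': "distinct [v, u', x, w']" "{u', x} \<in> E" "{x, w'} \<in> E"
      using cs' x' psp_sub[of E v] by (auto simp: chordless_square_def)
    have "{u', w'} = {u, w}" using common[OF eu' ew' nd' cs''] cm0 by simp
    then have "(u' = u \<and> w' = w) \<or> (u' = w \<and> w' = u)" by (metis doubleton_eq_iff)
    then show "Q = Q0" unfolding Q Q0_def x' by (auto simp: insert_commute)
  qed
qed

end
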